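(* For every $X\in\mathfrak g$, with $x^{(-1)}_N$ denoting the coefficient of $\lambda^{-1}E_{N,1}$ (i.e. of $\lambda^{-1}E_{N,N+1}$) in $X$, ${\rm A}_2(\mathcal FX)+{\rm S}^*(X\mathcal F)=\mathcal F\,{\rm R}(X)-2\alpha x_N^{(-1)}I$ and ${\rm A}_1(X\mathcal F)+{\rm S}(\mathcal FX)={\rm R}(X)\,\mathcal F-2\alpha x_N^{(-1)}I$.
   Context: Periodic lattice setting: $N\ge2$; $\mathfrak g=\{X(\lambda)\in gl(N)[\lambda,\lambda^{-1}]:\Omega X(\lambda)\Omega^{-1}=X(\omega\lambda)\}$, $\omega=e^{2\pi i/N}$, $\Omega=\mathrm{diag}(1,\omega,\dots,\omega^{N-1})$, matrix indices modulo $N$. $\mathfrak g_p$ = elements $\lambda^p\sum_{j-k\equiv p\,(\mathrm{mod}\,N)}x_{jk}E_{jk}$; $P_0,P_{>0},P_{\ge0},P_{<0}$ the projections onto $\mathfrak g_0$, $\oplus_{p>0}\mathfrak g_p$, $\oplus_{p\ge0}\mathfrak g_p$, $\oplus_{p<0}\mathfrak g_p$. ${\rm R}=P_{\ge0}-P_{<0}$, ${\rm R}_0=P_{>0}-P_{<0}$. $W$ is linear with $W=W\circ P_0$ and $W(E_{kk})=\sum_{j=1}^N\mathrm{sgn}(k-j)E_{jj}$. ${\rm A}_1={\rm R}_0+W$, ${\rm A}_2={\rm R}_0-W$, ${\rm S}=P_0-W$, ${\rm S}^*=P_0+W$. $\alpha$ real, $\mathcal F=I-\alpha\lambda\sum_{k=1}^NE_{k+1,k}$.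 *)

theory Defs
  imports Complex_Main "HOL-Library.Function_Algebras"
begin

text \<open>Elements of gl(N)[lambda, lambda^-1] are represented as coefficient functions
  X p j k = coefficient of lambda^p at matrix entry (j,k); matrix indices are
  0-based (0..N-1), i.e. paper index i corresponds to i-1 here.\<close>

type_synonym lmat = "int \<Rightarrow> nat \<Rightarrow> nat \<Rightarrow> complex"

definition omega :: "nat \<Rightarrow> complex" where
  "omega N = cis (2 * pi / real N)"

text \<open>The twisted loop algebra g: finitely many powers of lambda, N x N coefficients,
  and Omega X(lambda) Omega^-1 = X(omega lambda) compared coefficientwise.\<close>
definition loop_alg :: "nat \<Rightarrow> lmat set" where
  "loop_alg N = {X. finite {p. \<exists>j k. X p j k \<noteq> 0}
      \<and> (\<forall>p j k. (N \<le> j \<or> N \<le> k) \<longrightarrow> X p j k = 0)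
      \<and> (\<forall>p j k. j < N \<longrightarrow> k < N \<longrightarrow>
            omega N ^ j * X p j k * inverse (omega N ^ k) = omega N powi p * X p j k)}"

definition lmul :: "nat \<Rightarrow> lmat \<Rightarrow> lmat \<Rightarrow> lmat" where
  "lmul N X Y = (\<lambda>p j k. \<Sum>a\<in>{a. \<exists>j k. X a j k \<noteq> 0}. \<Sum>l<N. X a j l * Y (p - a) l k)"

definition proj :: "int set \<Rightarrow> lmat \<Rightarrow> lmat" where
  "proj S X = (\<lambda>p j k. if p \<in> S then X p j k else 0)"

definition P0 :: "lmat \<Rightarrow> lmat" where "P0 = proj {0}"
definition Ppos :: "lmat \<Rightarrow> lmat" where "Ppos = proj {0<..}"
definition Pnn :: "lmat \<Rightarrow> lmat" where "Pnn = proj {0..}"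
definition Pneg :: "lmat \<Rightarrow> lmat" where "Pneg = proj {..<0}"

definition Rop :: "lmat \<Rightarrow> lmat" where "Rop X = Pnn X - Pneg X"
definition R0op :: "lmat \<Rightarrow> lmat" where "R0op X = Ppos X - Pneg X"

text \<open>W: linear, W = W o P_0, W(E_kk) = sum_j sgn(k-j) E_jj.  On g_0 (diagonal
  constant matrices) this gives the diagonal entry at j equal to
  sum_k sgn(k-j) x_kk.\<close>
definition Wop :: "nat \<Rightarrow> lmat \<Rightarrow> lmat" where
  "Wop N X = (\<lambda>p j k. if p = 0 \<and> j = k \<and> j < N
      then (\<Sum>i<N. of_int (sgn (int i - int j)) * P0 X 0 i i) else 0)"

definition A1 :: "nat \<Rightarrow> lmat \<Rightarrow> lmat" where "A1 N X = R0op X + Wop N X"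
definition A2 :: "nat \<Rightarrow> lmat \<Rightarrow> lmat" where "A2 N X = R0op X - Wop N X"
definition Sop :: "nat \<Rightarrow> lmat \<Rightarrow> lmat" where "Sop N X = P0 X - Wop N X"
definition Sstar :: "nat \<Rightarrow> lmat \<Rightarrow> lmat" where "Sstar N X = P0 X + Wop N X"

definition scalI :: "nat \<Rightarrow> complex \<Rightarrow> lmat" where
  "scalI N c = (\<lambda>p j k. if p = 0 \<and> j = k \<and> j < N then c else 0)"

definition Fmat :: "nat \<Rightarrow> real \<Rightarrow> lmat" where
  "Fmat N \<alpha> = (\<lambda>p j k. if j < N \<and> k < N then
      (if p = 0 \<and> j = k then 1
       else if p = 1 \<and> j = (k + 1) mod N then - complex_of_real \<alpha> else 0) else 0)"

end

theory Submission
  imports Defs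
begin

lemma sym_dvd:
  assumes X: "X \<in> loop_alg N" and j: "j < N" and k: "k < N" and nz: "X p j k \<noteq> 0"
  shows "int N dvd (int j - int k - p)"
proof -
  have N: "N > 0" using j by simp
  have "omega N ^ j * X p j k * inverse (omega N ^ k) = omega N powi p * X p j k"
    using X j k unfolding loop_alg_def by blast
  hence "omega N ^ j * inverse (omega N ^ k) = omega N powi p" using nz
    by (metis (no_types, lifting) mult.commute mult.left_commute mult_cancel_left)
  hence "cis (real j * (2*pi/N)) * cis (- (real k * (2*pi/N))) = cis (of_int p * (2*pi/N))"
    by (simp add: omega_def DeMoivre cis_power_int)
  hence h: "cis (real j * (2*pi/N) - real k * (2*pi/N)) = cis (of_int p * (2*pi/N))"
    by (simp add: cis_mult)
  have "cis ((real j - real k - of_int p) * (2*pi/N))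
     = cis (real j * (2*pi/N) - real k * (2*pi/N)) / cis (of_int p * (2*pi/N))"
    by (simp only: cis_divide, rule arg_cong[where f=cis], simp add: algebra_simps diff_divide_distrib add_divide_distrib)
  also have "... = 1" using h by (simp add: cis_neq_zero)
  finally have "cis ((real j - real k - of_int p) * (2*pi/N)) = 1" .
  hence "cos ((real j - real k - of_int p) * (2*pi/N)) = 1"
    by (simp add: complex_eq_iff)
  then obtain n :: int where "(real j - real k - of_int p) * (2*pi/N) = n * 2 * pi"
    by (auto simp: cos_one_2pi_int)
  hence eq: "(real j - real k - of_int p) * (2*pi/N) = n * 2 * pi" .
  have "(real j - real k - of_int p) * (2*pi) = ((real j - real k - of_int p) * (2*pi/N)) * N"
    using N by simp
  also have "... = (n * N) * (2*pi)" unfolding eq by (simp add: algebra_simps)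
  finally have "(real j - real k - of_int p) * (2*pi) = (n * N) * (2*pi)" .
  hence "real j - real k - of_int p = n * N" by simp
  hence "real_of_int (int j - int k - p) = real_of_int (n * int N)" by simp
  hence "int j - int k - p = n * int N" by (simp only: of_int_eq_iff)
  thus ?thesis by simp
qed

definition prv :: "nat \<Rightarrow> nat \<Rightarrow> nat" where "prv N j = (if j = 0 then N - 1 else j - 1)"
definition nxt :: "nat \<Rightarrow> nat \<Rightarrow> nat" where "nxt N k = (if Suc k = N then 0 else Suc k)"

lemma prv_lt: "j < N \<Longrightarrow> prv N j < N" by (auto simp: prv_def)
lemma nxt_lt: "k < N \<Longrightarrow> nxt N k < N" by (auto simp: nxt_def)
lemma nxt_prv: "j < N \<Longrightarrow> nxt N (prv N j) = j" by (auto simp: prv_def nxt_def)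
lemma nxt_inj: "a < N \<Longrightarrow> b < N \<Longrightarrow> nxt N a = nxt N b \<Longrightarrow> a = b"
  by (auto simp: nxt_def split: if_splits)

lemma mod_nxt: "l < N \<Longrightarrow> Suc l mod N = nxt N l"
  by (auto simp: nxt_def)

lemma nxt_eq_iff: "l < N \<Longrightarrow> j < N \<Longrightarrow> (j = nxt N l) \<longleftrightarrow> (l = prv N j)"
  by (auto simp: nxt_def prv_def)

lemma mod_prv: "l < N \<Longrightarrow> j < N \<Longrightarrow> (j = Suc l mod N) \<longleftrightarrow> (l = prv N j)"
  by (simp add: mod_nxt nxt_eq_iff)

lemma dvd_small_eq:
  assumes "x < N" "y < N" "int N dvd (int x - int y)" shows "x = y"
proof -
  have "int x mod int N = int y mod int N" using assms(3) by (simp add: mod_eq_dvd_iff)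
  thus ?thesis using assms(1,2) by simp
qed

lemma idx_nxt:
  assumes "a < N" "b < N" "int N dvd (int a - int b - (-1))" shows "b = nxt N a"
proof (cases "Suc a = N")
  case True
  hence "int N dvd (int 0 - int b)" using assms(3)
  proof -
    have "int a - int b - (-1) = int N + (int 0 - int b)" using True by simp
    thus ?thesis using assms(3) by (metis dvd_add_right_iff dvd_refl)
  qed
  hence "0 = b" using assms by (intro dvd_small_eq) auto
  thus ?thesis using True by (simp add: nxt_def)
next
  case False
  hence "Suc a < N" using assms by simp
  moreover have "int N dvd (int (Suc a) - int b)"
  proof -
    have "int (Suc a) - int b = int a - int b - (-1)" by simp
    thus ?thesis using assms(3) by metis
  qed
  ultimately have "Suc a = b" using assms by (intro dvd_small_eq) auto
  thus ?thesis using False by (simp add: nxt_def)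
qed

lemma Fmat0: "Fmat N \<alpha> 0 j l = (if j < N \<and> l < N \<and> j = l then 1 else 0)"
  by (simp add: Fmat_def)
lemma Fmat1: "Fmat N \<alpha> 1 j l = (if j < N \<and> l < N \<and> l = prv N j then - complex_of_real \<alpha> else 0)"
  unfolding Fmat_def using mod_prv[of l N j] by auto
lemma Fmat1': "Fmat N \<alpha> 1 l k = (if k < N \<and> l < N \<and> l = nxt N k then - complex_of_real \<alpha> else 0)"
  unfolding Fmat_def using mod_nxt[of k N] by auto
lemma Fmat_other: "p \<noteq> 0 \<Longrightarrow> p \<noteq> 1 \<Longrightarrow> Fmat N \<alpha> p j l = 0"
  by (simp add: Fmat_def)

lemma lmul_superset:
  assumes "finite T" "{a. \<exists>j k. X a j k \<noteq> 0} \<subseteq> T"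
  shows "lmul N X Y p j k = (\<Sum>a\<in>T. \<Sum>l<N. X a j l * Y (p - a) l k)"
  unfolding lmul_def
  by (rule sum.mono_neutral_left) (use assms in auto)

lemma lmulF_left:
  shows "lmul N (Fmat N \<alpha>) Y p j k = (if j < N then Y p j k - \<alpha> * Y (p-1) (prv N j) k else 0)"
proof -
  have "lmul N (Fmat N \<alpha>) Y p j k = (\<Sum>a\<in>{0,1}. \<Sum>l<N. Fmat N \<alpha> a j l * Y (p - a) l k)"
    by (rule lmul_superset) (auto simp: Fmat_def split: if_splits)
  also have "... = (\<Sum>l<N. Fmat N \<alpha> 0 j l * Y p l k) + (\<Sum>l<N. Fmat N \<alpha> 1 j l * Y (p - 1) l k)"
    by simp
  also have "... = (if j < N then Y p j k - \<alpha> * Y (p-1) (prv N j) k else 0)"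
  proof (cases "j < N")
    case True
    have 1: "(\<Sum>l<N. Fmat N \<alpha> 0 j l * Y p l k) = (\<Sum>l<N. if l = j then Y p l k else 0)"
      by (rule sum.cong) (auto simp: Fmat0 True)
    have 2: "(\<Sum>l<N. Fmat N \<alpha> 1 j l * Y (p - 1) l k) = (\<Sum>l<N. if l = prv N j then - \<alpha> * Y (p-1) l k else 0)"
      by (rule sum.cong) (auto simp: Fmat1 True)
    show ?thesis unfolding 1 2 using True prv_lt[OF True] by simp
  next
    case False
    thus ?thesis by (simp add: Fmat_def)
  qed
  finally show ?thesis .
qed

lemma lmulF_right:
  assumes fin: "finite {a. \<exists>j k. Y a j k \<noteq> 0}"
  shows "lmul N Y (Fmat N \<alpha>) p j k = (if k < N then Y p j k - \<alpha> * Y (p-1) j (nxt N k) else 0)"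
proof -
  let ?T = "{a. \<exists>j k. Y a j k \<noteq> 0} \<union> {p, p - 1}"
  have "lmul N Y (Fmat N \<alpha>) p j k = (\<Sum>a\<in>?T. \<Sum>l<N. Y a j l * Fmat N \<alpha> (p - a) l k)"
    by (rule lmul_superset) (use fin in auto)
  also have "... = (if k < N then Y p j k - \<alpha> * Y (p-1) j (nxt N k) else 0)"
  proof (cases "k < N")
    case True
    have "\<And>a. (\<Sum>l<N. Y a j l * Fmat N \<alpha> (p - a) l k)
       = (if a = p then Y p j k else 0) + (if a = p - 1 then - \<alpha> * Y (p-1) j (nxt N k) else 0)"
    proof -
      fix a
      have "(\<Sum>l<N. Y a j l * Fmat N \<alpha> (p - a) l k)
        = (\<Sum>l<N. (if a = p \<and> l = k then Y a j l else 0) + (if a = p - 1 \<and> l = nxt N k then - \<alpha> * Y a j l else 0))"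
        by (rule sum.cong, simp, cases "p - a = 0"; cases "p - a = 1")
           (auto simp: Fmat0 Fmat1' Fmat_other True)
      also have "... = (if a = p then Y p j k else 0) + (if a = p - 1 then - \<alpha> * Y (p-1) j (nxt N k) else 0)"
        by (cases "a = p"; cases "a = p - 1"; simp add: sum.distrib True nxt_lt sum.delta sum.delta')
      finally show "?thesis a" .
    qed
    hence "(\<Sum>a\<in>?T. \<Sum>l<N. Y a j l * Fmat N \<alpha> (p - a) l k)
        = (\<Sum>a\<in>?T. (if a = p then Y p j k else 0) + (if a = p - 1 then - \<alpha> * Y (p-1) j (nxt N k) else 0))"
      by simp
    also have "... = Y p j k - \<alpha> * Y (p-1) j (nxt N k)"
      using fin by (simp add: sum.distrib sum.delta)
    finally show ?thesis using True by simp
  next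
    case False
    thus ?thesis by (simp add: Fmat_def)
  qed
  finally show ?thesis .
qed


lemma tel_hi: "j < n \<Longrightarrow> (\<Sum>i\<in>{Suc j..<n}. y (i-1) - y i) = (y j - y (n-1) :: complex)"
proof (induction n)
  case 0 thus ?case by simp
next
  case (Suc n)
  show ?case
  proof (cases "j = n")
    case True thus ?thesis by simp
  next
    case False
    hence "j < n" using Suc.prems by simp
    hence "(\<Sum>i\<in>{Suc j..<Suc n}. y (i-1) - y i) = (\<Sum>i\<in>{Suc j..<n}. y (i-1) - y i) + (y (n-1) - y n)"
      by simp
    also have "... = y j - y n" using Suc.IH[OF \<open>j < n\<close>] by simp
    finally show ?thesis by simp
  qed
qed

lemma Wtel:
  fixes y :: "nat \<Rightarrow> complex"
  assumes j: "j < N"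
  shows "(\<Sum>i<N. of_int (sgn (int i - int j)) * (y (prv N i) - y i)) = y j + y (prv N j) - 2 * y (N-1)"
proof -
  let ?f = "\<lambda>i. of_int (sgn (int i - int j)) * (y (prv N i) - y i)"
  have split: "(\<Sum>i<N. ?f i) = (\<Sum>i<j. ?f i) + ?f j + (\<Sum>i\<in>{Suc j..<N}. ?f i)"
  proof -
    have "(\<Sum>i<N. ?f i) = (\<Sum>i\<in>{0..<j}. ?f i) + (\<Sum>i\<in>{j..<N}. ?f i)"
      unfolding lessThan_atLeast0 by (rule sym, rule sum.atLeastLessThan_concat) (use j in auto)
    also have "(\<Sum>i\<in>{j..<N}. ?f i) = ?f j + (\<Sum>i\<in>{Suc j..<N}. ?f i)"
      using j by (simp add: sum.atLeast_Suc_lessThan)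
    finally show ?thesis by (simp add: lessThan_atLeast0 add.assoc)
  qed
  have hi: "(\<Sum>i\<in>{Suc j..<N}. ?f i) = y j - y (N-1)"
  proof -
    have "(\<Sum>i\<in>{Suc j..<N}. ?f i) = (\<Sum>i\<in>{Suc j..<N}. y (i-1) - y i)"
      by (rule sum.cong) (auto simp: prv_def)
    thus ?thesis using tel_hi[OF j] by simp
  qed
  have lo: "(\<Sum>i<j. ?f i) = y (prv N j) - y (N-1)"
  proof (cases j)
    case 0 thus ?thesis by (simp add: prv_def)
  next
    case (Suc m)
    have "(\<Sum>i<j. ?f i) = ?f 0 + (\<Sum>i<m. ?f (Suc i))"
      unfolding Suc by (rule sum.lessThan_Suc_shift)
    also have "(\<Sum>i<m. ?f (Suc i)) = (\<Sum>i<m. - (y i - y (Suc i)))"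
      by (rule sum.cong) (auto simp: prv_def Suc)
    also have "... = - (y 0 - y m)" by (simp only: sum_negf sum_lessThan_telescope')
    also have "?f 0 = - (y (N-1) - y 0)" using Suc by (simp add: prv_def)
    finally show ?thesis using Suc by (simp add: prv_def)
  qed
  show ?thesis unfolding split hi lo by simp
qed


lemma Rop_val: "Rop X p j k = (if 0 \<le> p then X p j k else - X p j k)"
  by (simp add: Rop_def Pnn_def Pneg_def proj_def fun_diff_def)
lemma Wop_val: "Wop N Y p j k = (if p = 0 \<and> j = k \<and> j < N
      then (\<Sum>i<N. of_int (sgn (int i - int j)) * Y 0 i i) else 0)"
  by (simp add: Wop_def P0_def proj_def)
lemma A2_val: "A2 N Y p j k = (if 0 < p then Y p j k else if p < 0 then - Y p j k else 0) - Wop N Y p j k"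
  by (simp add: A2_def R0op_def Ppos_def Pneg_def proj_def fun_diff_def)
lemma A1_val: "A1 N Y p j k = (if 0 < p then Y p j k else if p < 0 then - Y p j k else 0) + Wop N Y p j k"
  by (simp add: A1_def R0op_def Ppos_def Pneg_def proj_def fun_diff_def plus_fun_def)
lemma Sstar_val: "Sstar N Y p j k = (if p = 0 then Y p j k else 0) + Wop N Y p j k"
  by (simp add: Sstar_def P0_def proj_def plus_fun_def)
lemma Sop_val: "Sop N Y p j k = (if p = 0 then Y p j k else 0) - Wop N Y p j k"
  by (simp add: Sop_def P0_def proj_def fun_diff_def)
lemma scalI_val: "scalI N c p j k = (if p = 0 \<and> j = k \<and> j < N then c else 0)"
  by (simp add: scalI_def)
lemma plus_val: "(A + B) p j k = A p j k + (B p j k :: complex)" by (simp add: plus_fun_def)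
lemma minus_val: "(A - B) p j k = A p j k - (B p j k :: complex)" by (simp add: fun_diff_def)

theorem mainTheorem8:
  fixes N :: nat and \<alpha> :: real and X :: lmat
  assumes "N \<ge> 2" and "X \<in> loop_alg N"
  shows "A2 N (lmul N (Fmat N \<alpha>) X) + Sstar N (lmul N X (Fmat N \<alpha>))
           = lmul N (Fmat N \<alpha>) (Rop X) - scalI N (2 * complex_of_real \<alpha> * X (-1) (N - 1) 0)
       \<and> A1 N (lmul N X (Fmat N \<alpha>)) + Sop N (lmul N (Fmat N \<alpha>) X)
           = lmul N (Rop X) (Fmat N \<alpha>) - scalI N (2 * complex_of_real \<alpha> * X (-1) (N - 1) 0)"
proof -
  have N1: "0 < N" using assms(1) by simp
  have fin: "finite {a. \<exists>j k. X a j k \<noteq> 0}" and Xz: "\<And>p j k. N \<le> j \<or> N \<le> k \<Longrightarrow> X p j k = 0"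
    using assms(2) unfolding loop_alg_def by auto
  have finR: "finite {a. \<exists>j k. Rop X a j k \<noteq> 0}"
    by (rule finite_subset[OF _ fin]) (auto simp: Rop_val split: if_splits)
  have Xm1: "\<And>a b. a < N \<Longrightarrow> b < N \<Longrightarrow> X (-1) a b \<noteq> 0 \<Longrightarrow> b = nxt N a"
    using sym_dvd[OF assms(2)] idx_nxt by blast
  define F where "F = Fmat N \<alpha>"
  define y where "y i = X (-1) i (nxt N i)" for i
  have FX: "lmul N F X p j k = (if j < N then X p j k - \<alpha> * X (p-1) (prv N j) k else 0)" for p j k
    unfolding F_def by (rule lmulF_left)
  have FR: "lmul N F (Rop X) p j k = (if j < N then Rop X p j k - \<alpha> * Rop X (p-1) (prv N j) k else 0)" for p j k
    unfolding F_def by (rule lmulF_left)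
  have XF: "lmul N X F p j k = (if k < N then X p j k - \<alpha> * X (p-1) j (nxt N k) else 0)" for p j k
    unfolding F_def by (rule lmulF_right[OF fin])
  have RF: "lmul N (Rop X) F p j k = (if k < N then Rop X p j k - \<alpha> * Rop X (p-1) j (nxt N k) else 0)" for p j k
    unfolding F_def by (rule lmulF_right[OF finR])
  have x_eq: "X (-1) (N - 1) 0 = y (N - 1)"
    unfolding y_def using N1 by (simp add: nxt_def)
  have x_eq': "X (-1) (N - Suc 0) 0 = y (N - Suc 0)" using x_eq by simp
  have yj: "X (-1) i (nxt N i) = y i" for i by (simp add: y_def)
  have ydiag: "X (-1) (prv N i) i = y (prv N i)" if "i < N" for i
    unfolding y_def using that by (simp add: nxt_prv)
  have S: "(\<Sum>i<N. of_int (sgn (int i - int j)) * lmul N X F 0 i i)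
         - (\<Sum>i<N. of_int (sgn (int i - int j)) * lmul N F X 0 i i)
         = \<alpha> * (y j + y (prv N j) - 2 * y (N-1))" if j: "j < N" for j
  proof -
    have "(\<Sum>i<N. of_int (sgn (int i - int j)) * lmul N X F 0 i i)
         - (\<Sum>i<N. of_int (sgn (int i - int j)) * lmul N F X 0 i i)
         = (\<Sum>i<N. of_int (sgn (int i - int j)) * lmul N X F 0 i i - of_int (sgn (int i - int j)) * lmul N F X 0 i i)"
      by (simp add: sum_subtractf)
    also have "... = (\<Sum>i<N. \<alpha> * (of_int (sgn (int i - int j)) * (y (prv N i) - y i)))"
      by (rule sum.cong) (auto simp: XF FX ydiag y_def algebra_simps)
    also have "... = \<alpha> * (y j + y (prv N j) - 2 * y (N-1))"
      by (simp only: sum_distrib_left[symmetric] Wtel[OF j])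
    finally show ?thesis .
  qed
  have off1: "X (-1) j (nxt N k) = 0" if "j < N" "k < N" "j \<noteq> k" for j k
    using Xm1[of j "nxt N k"] nxt_lt[of k N] nxt_inj[of k N j] that by auto
  have off2: "X (-1) (prv N j) k = 0" if "j < N" "k < N" "j \<noteq> k" for j k
    using Xm1[of "prv N j" k] prv_lt[of j N] nxt_prv[of j N] that by auto
  have E1: "(A2 N (lmul N F X) + Sstar N (lmul N X F)) p j k
           = (lmul N F (Rop X) - scalI N (2 * complex_of_real \<alpha> * X (-1) (N - 1) 0)) p j k" for p j k
  proof (cases "j < N \<and> k < N")
    case False
    thus ?thesis by (auto simp: plus_val minus_val A2_val Sstar_val Wop_val scalI_val FX XF FR Rop_val Xz)
  next
    case True
    show ?thesis
    proof (cases "p = 0")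
      case False
      thus ?thesis using True by (auto simp: plus_val minus_val A2_val Sstar_val Wop_val scalI_val FX XF FR Rop_val)
    next
      case p0: True
      show ?thesis
      proof (cases "j = k")
        case False
        thus ?thesis using True p0 off1 off2
          by (simp add: plus_val minus_val A2_val Sstar_val Wop_val scalI_val FX XF FR Rop_val)
      next
        case jk: True
        have "(A2 N (lmul N F X) + Sstar N (lmul N X F)) p j k
            = lmul N X F 0 j j + ((\<Sum>i<N. of_int (sgn (int i - int j)) * lmul N X F 0 i i)
               - (\<Sum>i<N. of_int (sgn (int i - int j)) * lmul N F X 0 i i))"
          using True p0 jk by (simp add: plus_val A2_val Sstar_val Wop_val)
        also have "... = X 0 j j - \<alpha> * y j + \<alpha> * (y j + y (prv N j) - 2 * y (N-1))"
          unfolding S[of j, OF conjunct1[OF True]] using True by (simp add: XF y_def)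
        also have "... = (lmul N F (Rop X) - scalI N (2 * complex_of_real \<alpha> * X (-1) (N - 1) 0)) p j k"
          unfolding x_eq using True p0 jk by (simp add: minus_val scalI_val FR Rop_val ydiag algebra_simps)
        finally show ?thesis .
      qed
    qed
  qed
  have E2: "(A1 N (lmul N X F) + Sop N (lmul N F X)) p j k
           = (lmul N (Rop X) F - scalI N (2 * complex_of_real \<alpha> * X (-1) (N - 1) 0)) p j k" for p j k
  proof (cases "j < N \<and> k < N")
    case False
    thus ?thesis by (auto simp: plus_val minus_val A1_val Sop_val Wop_val scalI_val FX XF RF Rop_val Xz)
  next
    case True
    show ?thesis
    proof (cases "p = 0")
      case False
      thus ?thesis using True by (auto simp: plus_val minus_val A1_val Sop_val Wop_val scalI_val FX XF RF Rop_val)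
    next
      case p0: True
      show ?thesis
      proof (cases "j = k")
        case False
        thus ?thesis using True p0 off1 off2
          by (simp add: plus_val minus_val A1_val Sop_val Wop_val scalI_val FX XF RF Rop_val)
      next
        case jk: True
        have "(A1 N (lmul N X F) + Sop N (lmul N F X)) p j k
            = lmul N F X 0 j j + ((\<Sum>i<N. of_int (sgn (int i - int j)) * lmul N X F 0 i i)
               - (\<Sum>i<N. of_int (sgn (int i - int j)) * lmul N F X 0 i i))"
          using True p0 jk by (simp add: plus_val A1_val Sop_val Wop_val)
        also have "... = X 0 j j - \<alpha> * y (prv N j) + \<alpha> * (y j + y (prv N j) - 2 * y (N-1))"
          unfolding S[of j, OF conjunct1[OF True]] using True by (simp add: FX ydiag)
        also have "... = (lmul N (Rop X) F - scalI N (2 * complex_of_real \<alpha> * X (-1) (N - 1) 0)) p j k"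
          unfolding x_eq using True p0 jk by (simp add: minus_val scalI_val RF Rop_val yj algebra_simps)
        finally show ?thesis .
      qed
    qed
  qed
  show ?thesis unfolding F_def[symmetric]
    using E1 E2 by (auto intro!: ext)
qed

end
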